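(* Let $k$ be a field of characteristic zero, $n\ge3$, $R=k[x_1,\ldots,x_{2n}]$, and $M$ the $2\times n$ generic matrix whose entries are the variables $x_1,\ldots,x_{2n}$. Let $J=I_2(M)$ be the ideal of $2\times2$ minors of $M$ (of height $n-1$), $\Theta$ its Jacobian matrix, and $I=J+I_{n-1}(\Theta)$ the Jacobian ideal of $J$. Then $I_{n-1}(\Theta)=(x_1,\ldots,x_{2n})^{n-1}$ and the pair $J\subseteq I$ is Aluffi torsion-free.
   Context: A pair of ideals $J\subseteq I$ in a ring $R$ is called Aluffi torsion-free if $J\cap I^n=JI^{n-1}$ for all $n\ge1$ (with $I^0=R$). For an ideal $J=(f_1,\ldots,f_t)$ of height $r$ in a polynomial ring, with Jacobian matrix $\Theta=(\partial f_i/\partial x_j)$ and $I_r(\Theta)$ the ideal of $r\times r$ minors of $\Theta$, the Jacobian ideal of $J$ is $J+I_r(\Theta)$. *)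

theory Defs
  imports "HOL-Library.Poly_Mapping" "HOL-Combinatorics.Permutations"
begin

text \<open>Multivariate polynomials over a coefficient ring, in variables indexed by nat
  (variable x_{i+1} of the paper is Var i): maps from monomials (exponent vectors
  nat =>0 nat) to coefficients, with the convolution product of Poly_Mapping.\<close>
type_synonym 'a mpoly = "(nat \<Rightarrow>\<^sub>0 nat) \<Rightarrow>\<^sub>0 'a"

definition Var :: "nat \<Rightarrow> 'a::comm_ring_1 mpoly" where
  "Var i = Poly_Mapping.single (Poly_Mapping.single i 1) 1"

definition pd :: "nat \<Rightarrow> 'a::comm_ring_1 mpoly \<Rightarrow> 'a mpoly" where
  "pd i p = (\<Sum>(m::nat \<Rightarrow>\<^sub>0 nat)\<in>Poly_Mapping.keys p. Poly_Mapping.single (m - Poly_Mapping.single i 1)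
                              (of_nat (Poly_Mapping.lookup m i) * Poly_Mapping.lookup p m))"

definition ideal_gen :: "'a::comm_ring_1 set \<Rightarrow> 'a set" where
  "ideal_gen S = {x. \<exists>F c. finite F \<and> F \<subseteq> S \<and> x = (\<Sum>s\<in>F. c s * s)}"

definition ideal_mult :: "'a::comm_ring_1 set \<Rightarrow> 'a set \<Rightarrow> 'a set" where
  "ideal_mult I K = ideal_gen {a * b | a b. a \<in> I \<and> b \<in> K}"

definition ideal_add :: "'a::comm_ring_1 set \<Rightarrow> 'a set \<Rightarrow> 'a set" where
  "ideal_add I K = ideal_gen (I \<union> K)"

fun ideal_pow :: "'a::comm_ring_1 set \<Rightarrow> nat \<Rightarrow> 'a set" where
  "ideal_pow I 0 = UNIV"
| "ideal_pow I (Suc m) = ideal_mult (ideal_pow I m) I"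

definition aluffi_torsion_free :: "'a::comm_ring_1 set \<Rightarrow> 'a set \<Rightarrow> bool" where
  "aluffi_torsion_free J I \<longleftrightarrow> J \<subseteq> I \<and>
     (\<forall>m\<ge>1. J \<inter> ideal_pow I m = ideal_mult J (ideal_pow I (m - 1)))"

definition minor :: "('r \<Rightarrow> 'c \<Rightarrow> 'a::comm_ring_1) \<Rightarrow> 'r list \<Rightarrow> 'c list \<Rightarrow> 'a" where
  "minor A rs cs = (\<Sum>p | p permutes {..<length rs}.
      of_int (sign p) * (\<Prod>i<length rs. A (rs ! i) (cs ! p i)))"

definition minors_ideal :: "nat \<Rightarrow> 'r set \<Rightarrow> 'c set \<Rightarrow> ('r \<Rightarrow> 'c \<Rightarrow> 'a::comm_ring_1) \<Rightarrow> 'a set" where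
  "minors_ideal r Rows Cols A = ideal_gen {minor A rs cs | rs cs.
      length rs = r \<and> length cs = r \<and> distinct rs \<and> distinct cs \<and>
      set rs \<subseteq> Rows \<and> set cs \<subseteq> Cols}"

definition genmat :: "nat \<Rightarrow> nat \<Rightarrow> nat \<Rightarrow> 'a::comm_ring_1 mpoly" where
  "genmat n r j = (if r = 0 then Var j else Var (n + j))"

definition gmin2 :: "nat \<Rightarrow> nat \<times> nat \<Rightarrow> 'a::comm_ring_1 mpoly" where
  "gmin2 n ij = genmat n 0 (fst ij) * genmat n 1 (snd ij) - genmat n 0 (snd ij) * genmat n 1 (fst ij)"

definition gen_idx :: "nat \<Rightarrow> (nat \<times> nat) set" where
  "gen_idx n = {(i, j). i < j \<and> j < n}"

definition jacobian :: "nat \<Rightarrow> nat \<times> nat \<Rightarrow> nat \<Rightarrow> 'a::comm_ring_1 mpoly" where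
  "jacobian n ij v = pd v (gmin2 n ij)"

end

theory Submission
  imports Defs
begin


definition isI :: "'a::comm_ring_1 set \<Rightarrow> bool" where
  "isI T \<longleftrightarrow> 0 \<in> T \<and> (\<forall>x\<in>T. \<forall>y\<in>T. x + y \<in> T) \<and> (\<forall>c. \<forall>x\<in>T. c * x \<in> T)"

lemma isI_0: "isI T \<Longrightarrow> 0 \<in> T" by (simp add: isI_def)
lemma isI_add: "isI T \<Longrightarrow> x \<in> T \<Longrightarrow> y \<in> T \<Longrightarrow> x + y \<in> T" by (simp add: isI_def)
lemma isI_mult: "isI T \<Longrightarrow> x \<in> T \<Longrightarrow> c * x \<in> T" by (simp add: isI_def)
lemma isI_mult2: "isI T \<Longrightarrow> x \<in> T \<Longrightarrow> x * c \<in> T" by (metis isI_mult mult.commute)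
lemma isI_neg: "isI T \<Longrightarrow> x \<in> T \<Longrightarrow> - x \<in> T"
  by (metis isI_mult mult_minus1)
lemma isI_diff: "isI T \<Longrightarrow> x \<in> T \<Longrightarrow> y \<in> T \<Longrightarrow> x - y \<in> T"
  by (metis isI_add isI_neg diff_conv_add_uminus)
lemma isI_sum: "isI T \<Longrightarrow> (\<And>i. i \<in> A \<Longrightarrow> f i \<in> T) \<Longrightarrow> sum f A \<in> T"
  by (induction A rule: infinite_finite_induct) (auto intro: isI_0 isI_add)
lemma isI_UNIV: "isI UNIV" by (simp add: isI_def)

lemma ideal_genI: "finite F \<Longrightarrow> F \<subseteq> S \<Longrightarrow> x = (\<Sum>s\<in>F. c s * s) \<Longrightarrow> x \<in> ideal_gen S"
  unfolding ideal_gen_def by (intro CollectI exI[of _ F] exI[of _ c] conjI)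

lemma ideal_genE:
  assumes "x \<in> ideal_gen S"
  obtains F c where "finite F" "F \<subseteq> S" "x = (\<Sum>s\<in>F. c s * s)"
  using assms unfolding ideal_gen_def mem_Collect_eq by (elim exE conjE) 

lemma isI_gen: "isI (ideal_gen S)"
  unfolding isI_def
proof (intro conjI ballI allI)
  show "0 \<in> ideal_gen S" by (rule ideal_genI[of "{}"]) simp_all
next
  fix x y assume x: "x \<in> ideal_gen S" and y: "y \<in> ideal_gen S"
  obtain F1 c1 where 1: "finite F1" "F1 \<subseteq> S" "x = (\<Sum>s\<in>F1. c1 s * s)"
    using x by (rule ideal_genE)
  obtain F2 c2 where 2: "finite F2" "F2 \<subseteq> S" "y = (\<Sum>s\<in>F2. c2 s * s)"
    using y by (rule ideal_genE)
  let ?c = "\<lambda>s. (if s \<in> F1 then c1 s else 0) + (if s \<in> F2 then c2 s else 0)"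
  have "(\<Sum>s\<in>F1 \<union> F2. ?c s * s) = (\<Sum>s\<in>F1 \<union> F2. (if s \<in> F1 then c1 s * s else 0)) + (\<Sum>s\<in>F1 \<union> F2. (if s \<in> F2 then c2 s * s else 0))"
    unfolding sum.distrib[symmetric] by (intro sum.cong refl) (simp add: distrib_right)
  also have "(\<Sum>s\<in>F1 \<union> F2. (if s \<in> F1 then c1 s * s else 0)) = x"
    unfolding 1(3) using 1(1) 2(1) by (simp add: sum.If_cases Int_absorb1)
  also have "(\<Sum>s\<in>F1 \<union> F2. (if s \<in> F2 then c2 s * s else 0)) = y"
    unfolding 2(3) using 1(1) 2(1) by (simp add: sum.If_cases Int_absorb1)
  finally have "x + y = (\<Sum>s\<in>F1 \<union> F2. ?c s * s)" by simp
  moreover have "finite (F1 \<union> F2)" "F1 \<union> F2 \<subseteq> S" using 1(1,2) 2(1,2) by simp_all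
  ultimately show "x + y \<in> ideal_gen S" by (intro ideal_genI)
next
  fix c x assume x: "x \<in> ideal_gen S"
  obtain F d where 1: "finite F" "F \<subseteq> S" "x = (\<Sum>s\<in>F. d s * s)" using x by (rule ideal_genE)
  have "c * x = (\<Sum>s\<in>F. (c * d s) * s)" unfolding 1(3) by (simp add: sum_distrib_left mult.assoc)
  then show "c * x \<in> ideal_gen S" using 1(1,2) by (intro ideal_genI)
qed

lemma gen_in: "s \<in> S \<Longrightarrow> s \<in> ideal_gen S"
  unfolding ideal_gen_def by (intro CollectI exI[of _ "{s}"] exI[of _ "\<lambda>_. 1"]) auto

lemma gen_min: "isI T \<Longrightarrow> S \<subseteq> T \<Longrightarrow> ideal_gen S \<subseteq> T"
proof
  fix x assume T: "isI T" "S \<subseteq> T" and x: "x \<in> ideal_gen S"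
  obtain F d where 1: "finite F" "F \<subseteq> S" "x = (\<Sum>s\<in>F. d s * s)" using x by (rule ideal_genE)
  show "x \<in> T" unfolding 1(3) using 1 T by (intro isI_sum isI_mult) auto
qed

lemma gen_mono: "S \<subseteq> S' \<Longrightarrow> ideal_gen S \<subseteq> ideal_gen S'"
  by (meson gen_in gen_min isI_gen subset_iff)

lemma gen_ideal: "isI T \<Longrightarrow> ideal_gen T = T"
  by (simp add: gen_in gen_min subsetI subset_antisym)

lemma isI_imult: "isI (ideal_mult A B)" by (simp add: ideal_mult_def isI_gen)
lemma imult_in: "a \<in> A \<Longrightarrow> b \<in> B \<Longrightarrow> a * b \<in> ideal_mult A B"
  unfolding ideal_mult_def by (rule gen_in) blast
lemma imult_min: "isI T \<Longrightarrow> (\<And>a b. a \<in> A \<Longrightarrow> b \<in> B \<Longrightarrow> a * b \<in> T) \<Longrightarrow> ideal_mult A B \<subseteq> T"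
  unfolding ideal_mult_def by (rule gen_min) auto
lemma imult_mono: "A \<subseteq> A' \<Longrightarrow> B \<subseteq> B' \<Longrightarrow> ideal_mult A B \<subseteq> ideal_mult A' B'"
  by (rule imult_min) (auto intro: isI_imult imult_in)
lemma imult_comm: "ideal_mult A B = ideal_mult B A"
proof -
  have "ideal_mult X Y \<subseteq> ideal_mult Y X" for X Y :: "'a set"
    by (rule imult_min[OF isI_imult]) (metis imult_in mult.commute)
  then show ?thesis by blast
qed
lemma imult_sub_left: "isI A \<Longrightarrow> ideal_mult A B \<subseteq> A"
  by (rule imult_min) (auto intro: isI_mult2)
lemma imult_UNIV: "isI A \<Longrightarrow> ideal_mult A UNIV = A"
  apply (rule subset_antisym)
   apply (simp add: imult_sub_left)
  by (metis imult_in mult.right_neutral subsetI UNIV_I)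

lemma isI_pow: "isI (ideal_pow I m)"
  by (cases m) (auto simp: isI_UNIV isI_imult)

lemma imult_assoc_elem:
  assumes "a \<in> ideal_mult A B" "y \<in> C" "\<And>b c. b \<in> B \<Longrightarrow> c \<in> C \<Longrightarrow> b * c \<in> D"
  shows "a * y \<in> ideal_mult A D"
proof -
  have "ideal_mult A B \<subseteq> {a. a * y \<in> ideal_mult A D}"
  proof (rule imult_min)
    show "isI {a. a * y \<in> ideal_mult A D}" unfolding isI_def
      by (auto simp: distrib_right mult.assoc intro: isI_0 isI_add isI_mult isI_imult)
    fix a b assume "a \<in> A" "b \<in> B"
    then show "a * b \<in> {a. a * y \<in> ideal_mult A D}" using assms by (simp add: mult.assoc imult_in)
  qed
  then show ?thesis using assms by blast
qed



definition dg :: "nat \<Rightarrow> (nat \<Rightarrow>\<^sub>0 nat) \<Rightarrow> nat" where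
  "dg N a = (\<Sum>i<N. Poly_Mapping.lookup a i)"

definition P :: "nat \<Rightarrow> nat \<Rightarrow> 'a::comm_ring_1 mpoly set" where
  "P N k = {p. \<forall>a\<in>Poly_Mapping.keys p. k \<le> dg N a}"

lemma dg_add: "dg N (a + b) = dg N a + dg N b"
  by (simp add: dg_def lookup_add sum.distrib)

lemma dg_single: "dg N (Poly_Mapping.single i c) = (if i < N then c else 0)"
  by (simp add: dg_def lookup_single when_def)

lemma dg_zero[simp]: "dg N 0 = 0" by (simp add: dg_def)

lemma PI: "(\<And>a. a \<in> Poly_Mapping.keys p \<Longrightarrow> k \<le> dg N a) \<Longrightarrow> p \<in> P N k"
  by (simp add: P_def)
lemma PD: "p \<in> P N k \<Longrightarrow> a \<in> Poly_Mapping.keys p \<Longrightarrow> k \<le> dg N a"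
  by (simp add: P_def)

lemma P_mult: assumes "p \<in> P N k" "q \<in> P N l" shows "p * q \<in> P N (k + l)"
proof (rule PI)
  fix a assume "a \<in> Poly_Mapping.keys (p * q)"
  then obtain b c where "a = b + c" "b \<in> Poly_Mapping.keys p" "c \<in> Poly_Mapping.keys q" using keys_mult by blast
  then show "k + l \<le> dg N a" using assms by (simp add: dg_add PD add_mono)
qed

lemma P_mult_any: assumes "q \<in> P N l" shows "p * q \<in> P N l"
proof (rule PI)
  fix a assume "a \<in> Poly_Mapping.keys (p * q)"
  then obtain b c where "a = b + c" "b \<in> Poly_Mapping.keys p" "c \<in> Poly_Mapping.keys q" using keys_mult by blast
  then show "l \<le> dg N a" using assms by (simp add: dg_add PD trans_le_add2)
qed

lemma isI_P: "isI (P N k :: 'a::comm_ring_1 mpoly set)"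
  unfolding isI_def
proof (intro conjI ballI allI)
  show "0 \<in> P N k" by (simp add: P_def)
  fix x y :: "'a mpoly" assume "x \<in> P N k" "y \<in> P N k"
  then show "x + y \<in> P N k" using keys_add by (force simp: P_def)
next
  fix c x :: "'a mpoly" assume "x \<in> P N k" then show "c * x \<in> P N k" by (rule P_mult_any)
qed

lemma P_anti: "k \<le> l \<Longrightarrow> P N l \<subseteq> P N k"
  by (auto simp: P_def)

lemma P0: "P N 0 = UNIV" by (simp add: P_def)

lemma keys_Var: "Poly_Mapping.keys (Var i :: 'a::comm_ring_1 mpoly) = {Poly_Mapping.single i 1}"
  by (simp add: Var_def)

lemma Var_P: "i < N \<Longrightarrow> Var i \<in> P N 1"
  by (simp add: P_def keys_Var dg_single)

lemma prodVar_single: "prod_list (map Var zs) = (Poly_Mapping.single (sum_list (map (\<lambda>i. Poly_Mapping.single i 1) zs)) 1 :: 'a::comm_ring_1 mpoly)"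
  by (induction zs) (simp_all add: Var_def mult_single)

lemma prodVar_P: "set zs \<subseteq> {..<N} \<Longrightarrow> (prod_list (map Var zs) :: 'a::comm_ring_1 mpoly) \<in> P N (length zs)"
proof (induction zs)
  case Nil then show ?case by (simp add: P0)
next
  case (Cons z zs)
  then have "Var z * prod_list (map Var zs) \<in> (P N (1 + length zs) :: 'a mpoly set)"
    by (intro P_mult Var_P) auto
  then show ?case by simp
qed

lemma dg_pos: "dg N a \<noteq> 0 \<Longrightarrow> \<exists>i<N. Poly_Mapping.lookup a i \<noteq> 0"
proof (rule ccontr)
  assume "dg N a \<noteq> 0" "\<not> (\<exists>i<N. Poly_Mapping.lookup a i \<noteq> 0)"
  then have "\<forall>i\<in>{..<N}. Poly_Mapping.lookup a i = 0" by simp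
  then have "dg N a = 0" unfolding dg_def by (rule sum.neutral)
  with \<open>dg N a \<noteq> 0\<close> show False by simp
qed

lemma mono_decomp: "k \<le> dg N a \<Longrightarrow> \<exists>zs b. length zs = k \<and> set zs \<subseteq> {..<N} \<and> a = b + sum_list (map (\<lambda>i. Poly_Mapping.single i 1) zs)"
proof (induction k arbitrary: a)
  case 0 then show ?case by (intro exI[of _ "[]"] exI[of _ a]) simp
next
  case (Suc k)
  then have "dg N a \<noteq> 0" by simp
  then obtain i where i: "i < N" "Poly_Mapping.lookup a i \<noteq> 0" using dg_pos by blast
  define a' where "a' = a - Poly_Mapping.single i 1"
  have a: "a = a' + Poly_Mapping.single i 1"
  proof (rule poly_mapping_eqI)
    fix j show "Poly_Mapping.lookup a j = Poly_Mapping.lookup (a' + Poly_Mapping.single i 1) j"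
      using i unfolding a'_def lookup_add lookup_minus lookup_single when_def by auto
  qed
  have "dg N a = dg N a' + 1" using i by (subst a) (simp add: dg_add dg_single)
  then have "k \<le> dg N a'" using Suc.prems by simp
  then obtain zs b where zs: "length zs = k" "set zs \<subseteq> {..<N}" "a' = b + sum_list (map (\<lambda>i. Poly_Mapping.single i 1) zs)"
    using Suc.IH by blast
  have "a = b + sum_list (map (\<lambda>i. Poly_Mapping.single i 1) (i # zs))"
    using a zs(3) by (simp add: add.commute add.left_commute)
  then show ?case using i zs by (intro exI[of _ "i # zs"] exI[of _ b]) simp
qed

lemma mono_decomp2: "k \<le> dg N a \<Longrightarrow> \<exists>zs c. length zs = k \<and> set zs \<subseteq> {..<N} \<and>
   (Poly_Mapping.single a 1 :: 'a::comm_ring_1 mpoly) = c * prod_list (map Var zs)"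
proof -
  assume "k \<le> dg N a"
  then obtain zs b where zs: "length zs = k" "set zs \<subseteq> {..<N}" "a = b + sum_list (map (\<lambda>i. Poly_Mapping.single i 1) zs)"
    using mono_decomp by blast
  have "(Poly_Mapping.single a 1 :: 'a mpoly) = Poly_Mapping.single b 1 * prod_list (map Var zs)"
    unfolding prodVar_single mult_single zs(3) by simp
  then show ?thesis using zs(1,2) by blast
qed

lemma sum_singles: "p = (\<Sum>a\<in>Poly_Mapping.keys p. Poly_Mapping.single a (Poly_Mapping.lookup p a))"
  by (rule poly_mapping_eqI) (simp add: lookup_sum lookup_single when_def in_keys_iff)

lemma P_sub_ideal:
  assumes T: "isI (T :: 'a::comm_ring_1 mpoly set)" and h: "\<And>a. k \<le> dg N a \<Longrightarrow> Poly_Mapping.single a 1 \<in> T"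
  shows "P N k \<subseteq> T"
proof
  fix p :: "'a mpoly" assume p: "p \<in> P N k"
  have "(\<Sum>a\<in>Poly_Mapping.keys p. Poly_Mapping.single a (Poly_Mapping.lookup p a)) \<in> T"
  proof (rule isI_sum[OF T])
    fix a assume "a \<in> Poly_Mapping.keys p"
    then have "Poly_Mapping.single a 1 \<in> T" using p h PD by blast
    then have "Poly_Mapping.single 0 (Poly_Mapping.lookup p a) * Poly_Mapping.single a 1 \<in> T" by (rule isI_mult[OF T])
    then show "Poly_Mapping.single a (Poly_Mapping.lookup p a) \<in> T" by (simp add: mult_single)
  qed
  then show "p \<in> T" using sum_singles[of p] by simp
qed

definition mm :: "nat \<Rightarrow> 'a::comm_ring_1 mpoly set" where
  "mm N = ideal_gen (Var ` {..<N})"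

lemma prodVar_pow: "set zs \<subseteq> {..<N} \<Longrightarrow> (prod_list (map Var zs) :: 'a::comm_ring_1 mpoly) \<in> ideal_pow (mm N) (length zs)"
proof (induction zs)
  case Nil then show ?case by simp
next
  case (Cons z zs)
  then have "prod_list (map Var zs) * Var z \<in> ideal_mult (ideal_pow (mm N) (length zs)) (mm N :: 'a mpoly set)"
    by (intro imult_in) (auto simp: mm_def intro: gen_in)
  then show ?case by (simp add: mult.commute)
qed

lemma pow_eq_P: "ideal_pow (mm N) k = (P N k :: 'a::comm_ring_1 mpoly set)"
proof (rule subset_antisym)
  show "ideal_pow (mm N) k \<subseteq> (P N k :: 'a mpoly set)"
  proof (induction k)
    case 0 then show ?case by (simp add: P0)
  next
    case (Suc k)
    have m: "mm N \<subseteq> (P N 1 :: 'a mpoly set)" unfolding mm_def by (rule gen_min[OF isI_P], rule image_subsetI, rule Var_P) simp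
    have "ideal_mult (ideal_pow (mm N) k) (mm N) \<subseteq> (P N (k + 1) :: 'a mpoly set)"
    proof (rule imult_min[OF isI_P])
      fix a b :: "'a mpoly" assume "a \<in> ideal_pow (mm N) k" "b \<in> mm N"
      then have "a \<in> P N k" "b \<in> P N 1" using Suc m by auto
      then show "a * b \<in> P N (k + 1)" by (rule P_mult)
    qed
    then show ?case by simp
  qed
next
  show "P N k \<subseteq> (ideal_pow (mm N) k :: 'a mpoly set)"
  proof (rule P_sub_ideal[OF isI_pow])
    fix a assume "k \<le> dg N a"
    then obtain zs c where zs: "length zs = k" "set zs \<subseteq> {..<N}" "(Poly_Mapping.single a 1 :: 'a mpoly) = c * prod_list (map Var zs)"
      using mono_decomp2 by blast
    have "prod_list (map Var zs) \<in> (ideal_pow (mm N) k :: 'a mpoly set)" using prodVar_pow[OF zs(2)] zs(1) by simp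
    then have "c * prod_list (map Var zs) \<in> ideal_pow (mm N) k" by (rule isI_mult[OF isI_pow])
    then show "(Poly_Mapping.single a 1 :: 'a mpoly) \<in> ideal_pow (mm N) k" using zs(3) by simp
  qed
qed

lemma P_split: "P N (k + l) \<subseteq> ideal_mult (P N k) (P N l :: 'a::comm_ring_1 mpoly set)"
proof (rule P_sub_ideal[OF isI_imult])
  fix a assume "k + l \<le> dg N a"
  then obtain zs c where z: "length zs = k + l" "set zs \<subseteq> {..<N}" "(Poly_Mapping.single a 1 :: 'a mpoly) = c * prod_list (map Var zs)"
    using mono_decomp2 by blast
  have e: "prod_list (map Var zs) = prod_list (map Var (take k zs)) * (prod_list (map Var (drop k zs)) :: 'a mpoly)"
  proof -
    have "prod_list (map Var zs) = (prod_list (map Var (take k zs @ drop k zs)) :: 'a mpoly)" by simp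
    also have "\<dots> = prod_list (map Var (take k zs)) * prod_list (map Var (drop k zs))"
      by (simp only: map_append prod_list.append)
    finally show ?thesis .
  qed
  have lt: "length (take k zs) = k" using z(1) by simp
  have "set (take k zs) \<subseteq> {..<N}" using set_take_subset[of k zs] z(2) by blast
  then have "c * prod_list (map Var (take k zs)) \<in> (P N k :: 'a mpoly set)"
    using prodVar_P[of "take k zs" N] lt by (intro P_mult_any) simp
  moreover have "prod_list (map Var (drop k zs)) \<in> (P N l :: 'a mpoly set)"
    using prodVar_P[of "drop k zs" N] z(1,2) set_drop_subset by force
  ultimately show "(Poly_Mapping.single a 1 :: 'a mpoly) \<in> ideal_mult (P N k) (P N l)"
    using z(3) e imult_in[of "c * prod_list (map Var (take k zs))" "P N k" "prod_list (map Var (drop k zs))" "P N l"]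
    by (simp add: mult.assoc)
qed



lemma pd_superset:
  assumes "finite S" "Poly_Mapping.keys p \<subseteq> S"
  shows "pd i p = (\<Sum>m\<in>S. Poly_Mapping.single (m - Poly_Mapping.single i 1)
                              (of_nat (Poly_Mapping.lookup m i) * Poly_Mapping.lookup p m))"
  unfolding pd_def
  by (rule sum.mono_neutral_left) (use assms in \<open>auto simp: in_keys_iff\<close>)

abbreviation e :: "nat \<Rightarrow> nat \<Rightarrow>\<^sub>0 nat" where "e i \<equiv> Poly_Mapping.single i 1"

lemma gmin2_eq: "gmin2 n (i, j) = (Poly_Mapping.single (e i + e (n + j)) 1 - Poly_Mapping.single (e j + e (n + i)) 1 :: 'a::comm_ring_1 mpoly)"
  by (simp add: gmin2_def genmat_def Var_def mult_single)

lemma jac_formula: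
  assumes "i < j" "j < n"
  shows "jacobian n (i, j) w = (Poly_Mapping.single (e i + e (n + j) - e w) (of_nat (Poly_Mapping.lookup (e i + e (n + j)) w))
     - Poly_Mapping.single (e j + e (n + i) - e w) (of_nat (Poly_Mapping.lookup (e j + e (n + i)) w)) :: 'a::comm_ring_1 mpoly)"
proof -
  let ?A = "e i + e (n + j)" and ?B = "e j + e (n + i)"
  have AB: "?A \<noteq> ?B"
  proof
    assume "?A = ?B"
    then have "Poly_Mapping.lookup ?A i = Poly_Mapping.lookup ?B i" by simp
    then show False using assms by (simp add: lookup_add lookup_single)
  qed
  let ?g = "gmin2 n (i, j) :: 'a mpoly"
  have k: "Poly_Mapping.keys ?g \<subseteq> {?A, ?B}"
    unfolding gmin2_eq using keys_diff by fastforce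
  have lA: "Poly_Mapping.lookup ?g ?A = 1" and lB: "Poly_Mapping.lookup ?g ?B = -1"
    unfolding gmin2_eq using AB by (simp_all add: lookup_minus lookup_single when_def)
  have "jacobian n (i, j) w = pd w ?g" by (simp add: jacobian_def)
  also have "\<dots> = (\<Sum>m\<in>{?A, ?B}. Poly_Mapping.single (m - e w) (of_nat (Poly_Mapping.lookup m w) * Poly_Mapping.lookup ?g m))"
    by (rule pd_superset) (use k in auto)
  also have "\<dots> = Poly_Mapping.single (?A - e w) (of_nat (Poly_Mapping.lookup ?A w)) + Poly_Mapping.single (?B - e w) (- of_nat (Poly_Mapping.lookup ?B w))"
    using AB lA lB by simp
  finally show ?thesis by (simp add: single_uminus)
qed

lemma jac_eq:
  assumes "i < j" "j < n"
  shows "jacobian n (i, j) w = (if w = i then Var (n + j) else if w = n + j then Var i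
     else if w = j then - Var (n + i) else if w = n + i then - Var j else (0 :: 'a::comm_ring_1 mpoly))"
  using assms unfolding jac_formula[OF assms] Var_def
  by (auto simp: lookup_add lookup_single when_def single_uminus)

lemma Var_P1: "i < N \<Longrightarrow> Var i \<in> P N (Suc 0)" using Var_P by simp

lemma jac_P: "i < j \<Longrightarrow> j < n \<Longrightarrow> (jacobian n (i, j) w :: 'a::comm_ring_1 mpoly) \<in> P (2 * n) 1"
  unfolding jac_eq
  by (auto intro!: Var_P1 isI_neg[OF isI_P] isI_0[OF isI_P])



lemma prod_P: "finite A \<Longrightarrow> (\<And>i. i \<in> A \<Longrightarrow> f i \<in> P N 1) \<Longrightarrow> (prod f A :: 'a::comm_ring_1 mpoly) \<in> P N (card A)"
proof (induction A rule: finite_induct)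
  case empty then show ?case by (simp add: P0)
next
  case (insert x A)
  then have "f x * prod f A \<in> P N (1 + card A)" by (intro P_mult) auto
  then show ?case using insert by simp
qed

lemma minor_P:
  assumes "set rs \<subseteq> gen_idx n" "length rs = L"
  shows "(minor (jacobian n) rs cs :: 'a::comm_ring_1 mpoly) \<in> P (2 * n) L"
  unfolding minor_def
proof (rule isI_sum[OF isI_P], rule isI_mult[OF isI_P])
  fix p
  have "(\<Prod>i<length rs. jacobian n (rs ! i) (cs ! p i) :: 'a mpoly) \<in> P (2 * n) (card {..<length rs})"
  proof (rule prod_P)
    fix i assume "i \<in> {..<length rs}"
    then have "rs ! i \<in> gen_idx n" using assms nth_mem by blast
    then obtain a b where "rs ! i = (a, b)" "a < b" "b < n" by (auto simp: gen_idx_def)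
    then show "jacobian n (rs ! i) (cs ! p i) \<in> (P (2 * n) 1 :: 'a mpoly set)" using jac_P by simp
  qed simp
  then show "(\<Prod>i<length rs. jacobian n (rs ! i) (cs ! p i) :: 'a mpoly) \<in> P (2 * n) L" using assms by simp
qed

lemma Jac_sub_P: "(minors_ideal L (gen_idx n) C (jacobian n) :: 'a::comm_ring_1 mpoly set) \<subseteq> P (2 * n) L"
  unfolding minors_ideal_def by (rule gen_min[OF isI_P]) (auto intro: minor_P)

lemma perm_le_id:
  fixes p :: "nat \<Rightarrow> nat"
  assumes p: "p permutes {..<L}" and le: "\<forall>i<L. p i \<le> i"
  shows "p = id"
proof -
  have eq: "\<forall>i<L. p i = i"
  proof (rule ccontr)
    assume "\<not> (\<forall>i<L. p i = i)"
    then obtain a where a: "a < L" "p a \<noteq> a" by blast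
    have "sum p {..<L} < sum id {..<L}"
      by (rule sum_strict_mono_ex1) (use le a in \<open>auto intro!: bexI[of _ a] simp: le_neq_implies_less\<close>)
    moreover have "sum p {..<L} = sum id {..<L}"
      using sum.reindex_bij_betw[OF permutes_imp_bij[OF p], of id] by simp
    ultimately show False by simp
  qed
  show ?thesis
  proof
    fix x show "p x = id x"
      using eq permutes_not_in[OF p, of x] by (cases "x < L") auto
  qed
qed

lemma minor_triangular:
  assumes "length rs = L" "length cs = L"
    and tri: "\<And>i j. i < L \<Longrightarrow> j < L \<Longrightarrow> i < j \<Longrightarrow> A (rs ! i) (cs ! j) = (0::'a::comm_ring_1)"
  shows "minor A rs cs = (\<Prod>i<L. A (rs ! i) (cs ! i))"
proof -
  let ?S = "{p. p permutes {..<L}}"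
  let ?f = "\<lambda>p. of_int (sign p) * (\<Prod>i<L. A (rs ! i) (cs ! p i)) :: 'a"
  have fin: "finite ?S" by (rule finite_permutations) simp
  have id: "id \<in> ?S" by (simp add: permutes_id)
  have z: "?f p = 0" if "p \<in> ?S - {id}" for p
  proof -
    from that have p: "p permutes {..<L}" "p \<noteq> id" by auto
    then obtain i where i: "i < L" "\<not> p i \<le> i" using perm_le_id by blast
    have "p i < L" using permutes_in_image[OF p(1)] i by simp
    then have "A (rs ! i) (cs ! p i) = 0" using tri i by simp
    then have "(\<Prod>i<L. A (rs ! i) (cs ! p i)) = 0" using i by (intro prod_zero) auto
    then show ?thesis by simp
  qed
  have "minor A rs cs = sum ?f ?S" unfolding minor_def using assms(1) by simp
  also have "\<dots> = ?f id + sum ?f (?S - {id})" by (rule sum.remove[OF fin id])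
  also have "sum ?f (?S - {id}) = 0" using z by (intro sum.neutral) blast
  finally show ?thesis by simp
qed

lemma tree_exists:
  fixes v :: "nat \<Rightarrow> nat"
  assumes "finite U" "U \<inter> K = {}" "size H = card U" "\<forall>z\<in>#H. v z \<in> K \<union> U"
    "H \<noteq> {#} \<longrightarrow> (\<exists>z\<in>#H. v z \<in> K)"
  shows "\<exists>cs zs. distinct cs \<and> set cs = U \<and> mset zs = H \<and> length cs = card U \<and>
           (\<forall>i<card U. v (zs ! i) \<in> K \<union> set (take i cs))"
  using assms
proof (induction "card U" arbitrary: U K H)
  case 0
  then have "U = {}" "H = {#}" by auto
  then show ?case by (intro exI[of _ "[]"]) simp
next
  case (Suc k)
  then have Hne: "H \<noteq> {#}" by auto
  then obtain h where h: "h \<in># H" "v h \<in> K" using Suc.prems by blast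
  have Une: "U \<noteq> {}" using Suc.hyps by auto
  define u where "u = (if \<exists>z\<in>#H. v z \<in> U then v (SOME z. z \<in># H \<and> v z \<in> U) else (SOME u. u \<in> U))"
  have uU: "u \<in> U"
  proof (cases "\<exists>z\<in>#H. v z \<in> U")
    case True
    then have "\<exists>z. z \<in># H \<and> v z \<in> U" by blast
    then show ?thesis unfolding u_def using True by (metis (mono_tags, lifting) someI_ex)
  next
    case False then show ?thesis unfolding u_def using Une by (simp add: some_in_eq)
  qed
  let ?U = "U - {u}" and ?K = "K \<union> {u}" and ?H = "H - {#h#}"
  have c: "k = card ?U" using Suc.hyps uU Suc.prems(1) by simp
  have p1: "finite ?U" using Suc.prems by simp
  have p2: "?U \<inter> ?K = {}" using Suc.prems(2) by auto
  have p3: "size ?H = card ?U" using Suc.prems(3) Suc.hyps c h(1) by (simp add: size_Diff_singleton)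
  have p4: "\<forall>z\<in>#?H. v z \<in> ?K \<union> ?U" using Suc.prems(4) uU by (auto dest: in_diffD)
  have p5: "?H \<noteq> {#} \<longrightarrow> (\<exists>z\<in>#?H. v z \<in> ?K)"
  proof (cases "\<exists>z\<in>#H. v z \<in> U")
    case True
    then have "\<exists>z. z \<in># H \<and> v z \<in> U" by blast
    then have z0: "(SOME z. z \<in># H \<and> v z \<in> U) \<in># H" "v (SOME z. z \<in># H \<and> v z \<in> U) \<in> U"
      by (metis (mono_tags, lifting) someI_ex)+
    have ne: "(SOME z. z \<in># H \<and> v z \<in> U) \<noteq> h" using z0(2) h(2) Suc.prems(2) by blast
    then have "(SOME z. z \<in># H \<and> v z \<in> U) \<in># ?H" using z0(1) by (simp add: in_diff_count)
    moreover have "v (SOME z. z \<in># H \<and> v z \<in> U) = u" unfolding u_def using True by simp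
    ultimately show ?thesis by blast
  next
    case False
    show ?thesis
    proof
      assume "?H \<noteq> {#}"
      then obtain z where z: "z \<in># ?H" by (meson multiset_nonemptyE)
      then have "z \<in># H" by (rule in_diffD)
      then have "v z \<in> K" using False Suc.prems(4) by blast
      then show "\<exists>z\<in>#?H. v z \<in> ?K" using z by blast
    qed
  qed
  obtain cs zs where IH: "distinct cs" "set cs = ?U" "mset zs = ?H" "length cs = card ?U"
      "\<forall>i<card ?U. v (zs ! i) \<in> ?K \<union> set (take i cs)"
    using Suc.hyps(1)[OF c p1 p2 p3 p4 p5] by blast
  have g1: "distinct (u # cs)" using IH by simp
  have g2: "set (u # cs) = U" using IH uU by auto
  have g3: "mset (h # zs) = H" using IH h by simp
  have g4: "length (u # cs) = card U" using IH Suc.hyps c by simp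
  have g5: "\<forall>i<card U. v ((h # zs) ! i) \<in> K \<union> set (take i (u # cs))"
  proof (intro allI impI)
    fix i assume i: "i < card U"
    show "v ((h # zs) ! i) \<in> K \<union> set (take i (u # cs))"
    proof (cases i)
      case 0 then show ?thesis using h by simp
    next
      case (Suc i')
      then have "i' < card ?U" using i Suc.hyps c by simp
      then have "v (zs ! i') \<in> ?K \<union> set (take i' cs)" using IH(5) by blast
      then show ?thesis using Suc by auto
    qed
  qed
  show ?case using g1 g2 g3 g4 g5 by blast
qed



lemma nth_notin_take: "distinct xs \<Longrightarrow> i < length xs \<Longrightarrow> xs ! i \<notin> set (take i xs)"
proof
  assume d: "distinct xs" "i < length xs" and "xs ! i \<in> set (take i xs)"
  then obtain k where k: "k < length (take i xs)" "take i xs ! k = xs ! i" by (meson in_set_conv_nth)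
  then have "k < i" "xs ! k = xs ! i" by auto
  then show False using d nth_eq_iff_index_eq by fastforce
qed

lemma pm_prod:
  fixes L :: nat
  assumes "\<forall>i<L. f i = g i \<or> f i = - g i"
  shows "prod f {..<L} = prod g {..<L} \<or> prod f {..<L} = - (prod g {..<L} :: 'a::comm_ring_1)"
  using assms
proof (induction L)
  case 0 then show ?case by simp
next
  case (Suc L)
  then have IH: "prod f {..<L} = prod g {..<L} \<or> prod f {..<L} = - prod g {..<L}" by simp
  have "f L = g L \<or> f L = - g L" using Suc.prems by simp
  then show ?case using IH by (auto simp: prod.lessThan_Suc)
qed

lemma prodlist_nth: "prod_list (map f xs) = (\<Prod>i<length xs. f (xs ! i))"
  by (induction xs) (simp_all del: prod.lessThan_Suc add: prod.lessThan_Suc_shift)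

lemma jac_zero: "a < b \<Longrightarrow> b < n \<Longrightarrow> w \<noteq> a \<Longrightarrow> w \<noteq> b \<Longrightarrow> w \<noteq> n + a \<Longrightarrow> w \<noteq> n + b \<Longrightarrow>
  jacobian n (a, b) w = (0 :: 'a::comm_ring_1 mpoly)"
  by (simp add: jac_eq)
lemma jac1: "a < b \<Longrightarrow> b < n \<Longrightarrow> jacobian n (a, b) a = (Var (n + b) :: 'a::comm_ring_1 mpoly)"
  by (simp add: jac_eq)
lemma jac2: "a < b \<Longrightarrow> b < n \<Longrightarrow> jacobian n (a, b) (n + b) = (Var a :: 'a::comm_ring_1 mpoly)"
  by (simp add: jac_eq)
lemma jac3: "a < b \<Longrightarrow> b < n \<Longrightarrow> jacobian n (a, b) b = (- Var (n + a) :: 'a::comm_ring_1 mpoly)"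
  by (simp add: jac_eq)
lemma jac4: "a < b \<Longrightarrow> b < n \<Longrightarrow> jacobian n (a, b) (n + a) = (- Var b :: 'a::comm_ring_1 mpoly)"
  by (simp add: jac_eq)

lemma minmax_set: "min a b = min c d \<Longrightarrow> max a b = max c d \<Longrightarrow> {a, b} = {c, (d::nat)}"
  by (auto simp: min_def max_def split: if_splits)

lemma prod_in_Jac:
  assumes n: "n \<ge> 3" and len: "length zs0 = n - 1" and zs0: "set zs0 \<subseteq> {..<2*n}"
  shows "(prod_list (map Var zs0) :: 'a::comm_ring_1 mpoly) \<in> minors_ideal (n - 1) (gen_idx n) {..<2*n} (jacobian n)"
proof -
  let ?L = "n - 1"
  define r where "r = hd zs0 mod n"
  have ne: "zs0 \<noteq> []" using len n by auto
  have rn: "r < n" using n by (simp add: r_def)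
  obtain cs zs where T: "distinct cs" "set cs = {..<n} - {r}" "mset zs = mset zs0" "length cs = card ({..<n} - {r})"
      "\<forall>i<card ({..<n} - {r}). zs ! i mod n \<in> {r} \<union> set (take i cs)"
  proof -
    have "\<exists>cs zs. distinct cs \<and> set cs = {..<n} - {r} \<and> mset zs = mset zs0 \<and> length cs = card ({..<n} - {r}) \<and>
           (\<forall>i<card ({..<n} - {r}). zs ! i mod n \<in> {r} \<union> set (take i cs))"
    proof (rule tree_exists)
      show "finite ({..<n} - {r})" by simp
      show "({..<n} - {r}) \<inter> {r} = {}" by auto
      show "size (mset zs0) = card ({..<n} - {r})" using len rn by simp
      show "\<forall>z\<in>#mset zs0. z mod n \<in> {r} \<union> ({..<n} - {r})" using n by auto
      show "mset zs0 \<noteq> {#} \<longrightarrow> (\<exists>z\<in>#mset zs0. z mod n \<in> {r})" using ne r_def by (auto intro!: bexI[of _ "hd zs0"])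
    qed
    then show ?thesis using that by blast
  qed
  have cardU: "card ({..<n} - {r}) = ?L" using rn by simp
  have lcs: "length cs = ?L" using T(4) cardU by simp
  have lzs: "length zs = ?L" using T(3) len by (metis size_mset)
  have szs: "set zs \<subseteq> {..<2*n}" using T(3) zs0 by (metis set_mset_mset)
  define c where "c i = cs ! i" for i
  define h where "h i = zs ! i mod n" for i
  define row where "row i = (min (c i) (h i), max (c i) (h i))" for i
  define col where "col i = (if zs ! i < n then n + c i else c i)" for i
  define rs where "rs = map row [0..<?L]"
  define cl where "cl = map col [0..<?L]"
  have cU: "c i < n" "c i \<noteq> r" if "i < ?L" for i
    using that T(2) lcs nth_mem[of i cs] unfolding c_def by auto
  have hn: "h i < n" for i using n by (simp add: h_def)
  have htree: "h i \<in> {r} \<union> set (take i cs)" if "i < ?L" for i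
    using that T(5) cardU unfolding h_def by simp
  have ch: "c i \<noteq> h i" if "i < ?L" for i
    using htree[OF that] cU[OF that] nth_notin_take[OF T(1), of i] that lcs unfolding c_def by auto
  have key: "c j \<noteq> c i \<and> c j \<noteq> h i" if "i < j" "j < ?L" for i j
  proof
    show "c j \<noteq> c i" using that T(1) lcs unfolding c_def by (simp add: nth_eq_iff_index_eq)
    show "c j \<noteq> h i"
    proof
      assume eq: "c j = h i"
      then have "cs ! j \<in> set (take i cs)" using htree[of i] cU[of j] that unfolding c_def by auto
      then obtain k where "k < length (take i cs)" "take i cs ! k = cs ! j" by (meson in_set_conv_nth)
      then have "k < i" "cs ! k = cs ! j" by auto
      then show False using that T(1) lcs nth_eq_iff_index_eq by fastforce
    qed
  qed
  have rs_nth: "rs ! i = row i" if "i < ?L" for i using that by (simp add: rs_def)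
  have cl_nth: "cl ! i = col i" if "i < ?L" for i using that by (simp add: cl_def)
  have lrs: "length rs = ?L" and lcl: "length cl = ?L" by (simp_all add: rs_def cl_def)
  have rows_in: "set rs \<subseteq> gen_idx n"
  proof
    fix x assume "x \<in> set rs"
    then obtain i where i: "i < ?L" "x = row i" by (auto simp: rs_def)
    then show "x \<in> gen_idx n" using ch[OF i(1)] cU[OF i(1)] hn[of i]
      by (auto simp: row_def gen_idx_def min_def max_def)
  qed
  have cU2: "c i < 2 * n" if "i < ?L" for i using cU(1)[OF that] by simp
  have cols_in: "set cl \<subseteq> {..<2*n}"
    using cU(1) cU2 by (auto simp: cl_def col_def)
  have dist_rs: "distinct rs"
    unfolding rs_def distinct_map
  proof
    show "inj_on row (set [0..<?L])"
    proof (rule inj_onI)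
      fix i j assume i: "i \<in> set [0..<?L]" and j: "j \<in> set [0..<?L]" and eq: "row i = row j"
      have "{c i, h i} = {c j, h j}" using eq unfolding row_def by (intro minmax_set) simp_all
      then have cj: "c j \<in> {c i, h i}" and ci: "c i \<in> {c j, h j}" by auto
      have iL: "i < ?L" and jL: "j < ?L" using i j by auto
      show "i = j"
      proof (rule linorder_cases[of i j])
        assume "i < j" then show ?thesis using key[OF _ jL, of i] cj by auto
      next
        assume "j < i" then show ?thesis using key[OF _ iL, of j] ci by auto
      qed
    qed
  qed simp
  have dist_cl: "distinct cl"
    unfolding cl_def distinct_map
  proof
    show "inj_on col (set [0..<?L])"
    proof (rule inj_onI)
      fix i j assume i: "i \<in> set [0..<?L]" and j: "j \<in> set [0..<?L]" and eq: "col i = col j"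
      have "c i = c j" using eq cU[of i] cU[of j] i j unfolding col_def by (auto split: if_splits)
      then show "i = j" using T(1) lcs i j unfolding c_def by (simp add: nth_eq_iff_index_eq)
    qed
  qed simp
  have tri: "jacobian n (rs ! i) (cl ! j) = (0 :: 'a mpoly)" if "i < ?L" "j < ?L" "i < j" for i j
  proof -
    have k: "c j \<noteq> c i" "c j \<noteq> h i" using key[OF that(3,2)] by auto
    have "min (c i) (h i) < max (c i) (h i)" "max (c i) (h i) < n" using ch[OF that(1)] cU(1)[OF that(1)] hn[of i]
      by (simp_all add: min_def max_def)
    moreover have "c j \<noteq> min (c i) (h i)" "c j \<noteq> max (c i) (h i)" using k by (simp_all add: min_def max_def)
    moreover have "c j < n" using cU(1)[OF that(2)] .
    ultimately have "jacobian n (min (c i) (h i), max (c i) (h i)) (col j) = (0 :: 'a mpoly)"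
      unfolding col_def by (intro jac_zero) auto
    then show ?thesis unfolding rs_nth[OF that(1)] cl_nth[OF that(2)] row_def .
  qed
  have diag: "jacobian n (rs ! i) (cl ! i) = (Var (zs ! i) :: 'a mpoly) \<or> jacobian n (rs ! i) (cl ! i) = - (Var (zs ! i) :: 'a mpoly)"
    if i: "i < ?L" for i
  proof -
    have "zs ! i \<in> set zs" using i lzs by simp
    then have zl: "zs ! i < 2 * n" using szs by blast
    have mm: "min (c i) (h i) < max (c i) (h i)" "max (c i) (h i) < n" using ch[OF i] cU(1)[OF i] hn[of i]
      by (simp_all add: min_def max_def)
    show ?thesis
    proof (cases "zs ! i < n")
      case True
      then have hz: "h i = zs ! i" by (simp add: h_def)
      have cn: "c i < n" using cU(1)[OF i] .
      show ?thesis unfolding rs_nth[OF i] cl_nth[OF i] row_def col_def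
      proof (cases "c i < h i")
        case True
        then show "jacobian n (min (c i) (h i), max (c i) (h i)) (if zs ! i < n then n + c i else c i) = (Var (zs ! i) :: 'a mpoly) \<or>
          jacobian n (min (c i) (h i), max (c i) (h i)) (if zs ! i < n then n + c i else c i) = - (Var (zs ! i) :: 'a mpoly)"
          using \<open>zs ! i < n\<close> hz hn[of i] jac4[where 'a='a, of "c i" "h i" n] by simp
      next
        case False
        then have "h i < c i" using ch[OF i] by simp
        then show "jacobian n (min (c i) (h i), max (c i) (h i)) (if zs ! i < n then n + c i else c i) = (Var (zs ! i) :: 'a mpoly) \<or>
          jacobian n (min (c i) (h i), max (c i) (h i)) (if zs ! i < n then n + c i else c i) = - (Var (zs ! i) :: 'a mpoly)"
          using \<open>zs ! i < n\<close> hz cn jac2[where 'a='a, of "h i" "c i" n] by simp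
      qed
    next
      case False
      then have hz: "zs ! i = n + h i" using zl by (simp add: h_def le_mod_geq)
      have cn: "c i < n" using cU(1)[OF i] .
      show ?thesis unfolding rs_nth[OF i] cl_nth[OF i] row_def col_def
      proof (cases "c i < h i")
        case True
        then show "jacobian n (min (c i) (h i), max (c i) (h i)) (if zs ! i < n then n + c i else c i) = (Var (zs ! i) :: 'a mpoly) \<or>
          jacobian n (min (c i) (h i), max (c i) (h i)) (if zs ! i < n then n + c i else c i) = - (Var (zs ! i) :: 'a mpoly)"
          using \<open>\<not> zs ! i < n\<close> hz hn[of i] jac1[where 'a='a, of "c i" "h i" n] by simp
      next
        case False
        then have "h i < c i" using ch[OF i] by simp
        then show "jacobian n (min (c i) (h i), max (c i) (h i)) (if zs ! i < n then n + c i else c i) = (Var (zs ! i) :: 'a mpoly) \<or>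
          jacobian n (min (c i) (h i), max (c i) (h i)) (if zs ! i < n then n + c i else c i) = - (Var (zs ! i) :: 'a mpoly)"
          using \<open>\<not> zs ! i < n\<close> hz cn jac3[where 'a='a, of "h i" "c i" n] by simp
      qed
    qed
  qed
  have mt: "minor (jacobian n) rs cl = (\<Prod>i<?L. jacobian n (rs ! i) (cl ! i) :: 'a mpoly)"
    by (rule minor_triangular[where A="jacobian n", OF lrs lcl tri])
  have pz: "(\<Prod>i<?L. Var (zs ! i)) = (prod_list (map Var zs0) :: 'a mpoly)"
  proof -
    have "(\<Prod>i<?L. Var (zs ! i)) = (prod_list (map Var zs) :: 'a mpoly)" using lzs by (simp add: prodlist_nth)
    also have "\<dots> = prod_mset (image_mset Var (mset zs))" by (metis mset_map prod_mset_prod_list)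
    also have "\<dots> = prod_list (map Var zs0)" using T(3) by (metis mset_map prod_mset_prod_list)
    finally show ?thesis .
  qed
  have pm: "minor (jacobian n) rs cl = (prod_list (map Var zs0) :: 'a mpoly) \<or> minor (jacobian n) rs cl = - (prod_list (map Var zs0) :: 'a mpoly)"
  proof -
    have "\<forall>i<?L. jacobian n (rs ! i) (cl ! i) = (Var (zs ! i) :: 'a mpoly) \<or> jacobian n (rs ! i) (cl ! i) = - (Var (zs ! i) :: 'a mpoly)"
      by (intro allI impI diag)
    from pm_prod[OF this] show ?thesis unfolding mt pz .
  qed
  have m: "minor (jacobian n) rs cl \<in> (minors_ideal (n - 1) (gen_idx n) {..<2*n} (jacobian n) :: 'a mpoly set)"
    unfolding minors_ideal_def using lrs lcl dist_rs dist_cl rows_in cols_in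
    by (intro gen_in CollectI exI[of _ rs] exI[of _ cl]) simp
  have iJ: "isI (minors_ideal (n - 1) (gen_idx n) {..<2*n} (jacobian n) :: 'a mpoly set)"
    unfolding minors_ideal_def by (rule isI_gen)
  show ?thesis
  proof (cases "minor (jacobian n) rs cl = (prod_list (map Var zs0) :: 'a mpoly)")
    case True then show ?thesis using m by simp
  next
    case False
    then have "minor (jacobian n) rs cl = - (prod_list (map Var zs0) :: 'a mpoly)" using pm by blast
    then have "prod_list (map Var zs0) = - (minor (jacobian n) rs cl :: 'a mpoly)" by simp
    then show ?thesis using isI_neg[OF iJ m] by simp
  qed
qed



definition Q :: "nat \<Rightarrow> nat \<Rightarrow> 'a::comm_ring_1 mpoly set" where
  "Q N k = {p. \<forall>a\<in>Poly_Mapping.keys p. dg N a < k}"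

lemma Q_add: "x \<in> Q N k \<Longrightarrow> y \<in> Q N k \<Longrightarrow> x + y \<in> Q N k"
  using keys_add by (force simp: Q_def)

lemma Q_sum: "(\<And>i. i \<in> A \<Longrightarrow> f i \<in> Q N k) \<Longrightarrow> sum f A \<in> Q N k"
proof (induction A rule: infinite_finite_induct)
  case (infinite A) then show ?case by (simp add: Q_def)
next
  case empty then show ?case by (simp add: Q_def)
next
  case (insert x F) then show ?case by (simp add: Q_add)
qed

lemma PQ_zero: "x \<in> P N k \<Longrightarrow> x \<in> Q N k \<Longrightarrow> x = 0"
proof -
  assume a: "x \<in> P N k" "x \<in> Q N k"
  have "Poly_Mapping.keys x = {}"
  proof (rule ccontr)
    assume "Poly_Mapping.keys x \<noteq> {}"
    then obtain b where b: "b \<in> Poly_Mapping.keys x" by blast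
    have "k \<le> dg N b" using PD[OF a(1) b] .
    moreover have "dg N b < k" using a(2) b unfolding Q_def by blast
    ultimately show False by simp
  qed
  then show "x = 0" by simp
qed

definition hi :: "nat \<Rightarrow> nat \<Rightarrow> 'a::comm_ring_1 mpoly \<Rightarrow> 'a mpoly" where
  "hi N t p = Poly_Mapping.mapp (\<lambda>a v. if t \<le> dg N a then v else 0) p"

lemma lookup_hi: "Poly_Mapping.lookup (hi N t p) a = (if t \<le> dg N a then Poly_Mapping.lookup p a else 0)"
  by (simp add: hi_def lookup_mapp when_def in_keys_iff)

lemma hi_P: "hi N t p \<in> P N t"
  by (rule PI) (simp add: in_keys_iff lookup_hi split: if_splits)

lemma lo_Q: "p - hi N t p \<in> Q N t"
  unfolding Q_def mem_Collect_eq
proof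
  fix a assume "a \<in> Poly_Mapping.keys (p - hi N t p)"
  then have "Poly_Mapping.lookup p a - Poly_Mapping.lookup (hi N t p) a \<noteq> 0" by (simp add: in_keys_iff lookup_minus)
  then show "dg N a < t" by (cases "t \<le> dg N a") (simp_all add: lookup_hi)
qed

lemma Q_mult_hom: assumes "p \<in> Q N t" "\<forall>a\<in>Poly_Mapping.keys s. dg N a \<le> 2"
  shows "p * s \<in> Q N (t + 2)"
  unfolding Q_def mem_Collect_eq
proof
  fix a assume "a \<in> Poly_Mapping.keys (p * s)"
  then obtain b c where "a = b + c" "b \<in> Poly_Mapping.keys p" "c \<in> Poly_Mapping.keys s" using keys_mult by blast
  then show "dg N a < t + 2" using assms by (force simp: Q_def dg_add)
qed

lemma J_trunc:
  assumes hom: "\<And>g. g \<in> G \<Longrightarrow> g \<in> P N 2 \<and> (\<forall>a\<in>Poly_Mapping.keys g. dg N a \<le> 2)"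
    and x: "x \<in> ideal_gen G" "x \<in> P N (t + 2)"
  shows "x \<in> ideal_mult (ideal_gen G) (P N t :: 'a::comm_ring_1 mpoly set)"
proof -
  obtain F c where F: "finite F" "F \<subseteq> G" "x = (\<Sum>s\<in>F. c s * s)" using x(1) by (rule ideal_genE)
  define f where "f = (\<Sum>s\<in>F. hi N t (c s) * s)"
  define y where "y = (\<Sum>s\<in>F. (c s - hi N t (c s)) * s)"
  have xfy: "x = f + y" unfolding F(3) f_def y_def by (simp add: sum.distrib[symmetric] algebra_simps)
  have f1: "f \<in> ideal_mult (ideal_gen G) (P N t)" unfolding f_def
  proof (rule isI_sum[OF isI_imult])
    fix s assume "s \<in> F"
    then have "s \<in> ideal_gen G" using F(2) gen_in by blast
    then have "s * hi N t (c s) \<in> ideal_mult (ideal_gen G) (P N t)" using hi_P by (rule imult_in)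
    then show "hi N t (c s) * s \<in> ideal_mult (ideal_gen G) (P N t)" by (simp add: mult.commute)
  qed
  have f2: "f \<in> P N (t + 2)" unfolding f_def
    by (rule isI_sum[OF isI_P]) (use F(2) hom hi_P in \<open>blast intro: P_mult\<close>)
  have yQ: "y \<in> Q N (t + 2)" unfolding y_def
    by (rule Q_sum) (use F(2) hom lo_Q in \<open>blast intro: Q_mult_hom\<close>)
  have "y = x - f" using xfy by simp
  then have "y \<in> P N (t + 2)" using isI_diff[OF isI_P x(2) f2] by simp
  then have "y = 0" using yQ by (rule PQ_zero)
  then show ?thesis using xfy f1 by simp
qed



lemma isI_sumset: assumes "isI A" "isI B" shows "isI {a + b |a b. a \<in> A \<and> b \<in> B}"
  unfolding isI_def
proof (intro conjI ballI allI)
  show "0 \<in> {a + b |a b. a \<in> A \<and> b \<in> B}" using isI_0[OF assms(1)] isI_0[OF assms(2)] by force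
next
  fix x y assume "x \<in> {a + b |a b. a \<in> A \<and> b \<in> B}" "y \<in> {a + b |a b. a \<in> A \<and> b \<in> B}"
  then obtain a b a' b' where "x = a + b" "a \<in> A" "b \<in> B" "y = a' + b'" "a' \<in> A" "b' \<in> B" by blast
  moreover have "x + y = (a + a') + (b + b')" using calculation by (simp add: algebra_simps)
  ultimately show "x + y \<in> {a + b |a b. a \<in> A \<and> b \<in> B}" using isI_add assms by blast
next
  fix c x assume "x \<in> {a + b |a b. a \<in> A \<and> b \<in> B}"
  then obtain a b where "x = a + b" "a \<in> A" "b \<in> B" by blast
  moreover have "c * x = c * a + c * b" using calculation by (simp add: algebra_simps)
  ultimately show "c * x \<in> {a + b |a b. a \<in> A \<and> b \<in> B}" using isI_mult assms by blast
qed

lemma aluffi_abstract: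
  fixes J :: "'a::comm_ring_1 mpoly set"
  assumes isJ: "isI J"
    and trunc: "\<And>t x. x \<in> J \<Longrightarrow> x \<in> P N (t + 2) \<Longrightarrow> x \<in> ideal_mult J (P N t)"
    and d2: "2 \<le> d" and Idef: "I = ideal_gen (J \<union> P N d)"
  shows "aluffi_torsion_free J I"
proof -
  have isI: "isI I" unfolding Idef by (rule isI_gen)
  have JI: "J \<subseteq> I" unfolding Idef by (auto intro: gen_in)
  have PI: "P N d \<subseteq> I" unfolding Idef by (auto intro: gen_in)
  have Ppow: "P N (d * m) \<subseteq> ideal_pow I m" for m
  proof (induction m)
    case 0 then show ?case by simp
  next
    case (Suc m)
    have "P N (d * Suc m) = P N (d * m + d)" by (simp add: algebra_simps)
    also have "\<dots> \<subseteq> ideal_mult (P N (d * m)) (P N d)" by (rule P_split)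
    also have "\<dots> \<subseteq> ideal_mult (ideal_pow I m) I" using Suc PI by (rule imult_mono)
    finally show ?case by simp
  qed
  define S where "S k = {a + b |a b. a \<in> ideal_mult J (ideal_pow I k) \<and> b \<in> P N (d * Suc k)}" for k
  have isS: "isI (S k)" for k unfolding S_def by (rule isI_sumset[OF isI_imult isI_P])
  have JU: "ideal_mult J UNIV = J" by (rule imult_UNIV[OF isJ])
  have IS0: "I \<subseteq> S 0" unfolding Idef
  proof (rule gen_min[OF isS])
    show "J \<union> P N d \<subseteq> S 0"
    proof
      fix x assume "x \<in> J \<union> P N d"
      then show "x \<in> S 0"
      proof
        assume "x \<in> J"
        then have "x + 0 \<in> S 0" unfolding S_def using JU isI_0[OF isI_P] by fastforce
        then show ?thesis by simp
      next
        assume "x \<in> P N d"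
        then have "0 + x \<in> S 0" unfolding S_def using isI_0[OF isI_imult] by fastforce
        then show ?thesis by simp
      qed
    qed
  qed
  have claim: "ideal_pow I (Suc k) \<subseteq> S k" for k
  proof (induction k)
    case 0
    have "ideal_pow I (Suc 0) = ideal_mult UNIV I" by simp
    also have "\<dots> \<subseteq> S 0"
      by (rule imult_min[OF isS]) (use IS0 isI_mult[OF isS] in blast)
    finally show ?case .
  next
    case (Suc k)
    have "ideal_mult (ideal_pow I (Suc k)) I \<subseteq> S (Suc k)"
    proof (rule imult_min[OF isS])
      fix x y assume x: "x \<in> ideal_pow I (Suc k)" and y: "y \<in> I"
      obtain a b where ab: "x = a + b" "a \<in> ideal_mult J (ideal_pow I k)" "b \<in> P N (d * Suc k)"
        using Suc x unfolding S_def by blast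
      obtain a' b' where ab': "y = a' + b'" "a' \<in> ideal_mult J (ideal_pow I 0)" "b' \<in> P N (d * Suc 0)"
        using IS0 y unfolding S_def by blast
      have a'J: "a' \<in> J" using ab'(2) JU by simp
      have b'P: "b' \<in> P N d" using ab'(3) by simp
      have 1: "a * y \<in> ideal_mult J (ideal_pow I (Suc k))"
        by (rule imult_assoc_elem[OF ab(2) y]) (simp add: imult_in)
      have "b \<in> ideal_pow I (Suc k)" using Ppow ab(3) by blast
      then have 2: "a' * b \<in> ideal_mult J (ideal_pow I (Suc k))" using a'J by (intro imult_in)
      have 3: "b * b' \<in> P N (d * Suc (Suc k))"
        using P_mult[OF ab(3) b'P] by (simp add: algebra_simps)
      have "x * y = (a * y + a' * b) + b * b'" using ab ab' by (simp add: algebra_simps)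
      then show "x * y \<in> S (Suc k)" unfolding S_def using 1 2 3 isI_add[OF isI_imult] by blast
    qed
    then show ?case by simp
  qed
  show ?thesis unfolding aluffi_torsion_free_def
  proof (intro conjI allI impI)
    show "J \<subseteq> I" by (rule JI)
    fix m :: nat assume "1 \<le> m"
    then obtain k where m: "m = Suc k" by (cases m) auto
    show "J \<inter> ideal_pow I m = ideal_mult J (ideal_pow I (m - 1))"
    proof
      show "ideal_mult J (ideal_pow I (m - 1)) \<subseteq> J \<inter> ideal_pow I m"
      proof
        fix x assume x: "x \<in> ideal_mult J (ideal_pow I (m - 1))"
        have "x \<in> J" using x imult_sub_left[OF isJ] by blast
        moreover have "ideal_mult J (ideal_pow I k) \<subseteq> ideal_mult (ideal_pow I k) I"
          using imult_comm imult_mono[OF JI order.refl] by metis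
        then have "x \<in> ideal_pow I m" using x m by auto
        ultimately show "x \<in> J \<inter> ideal_pow I m" by blast
      qed
    next
      show "J \<inter> ideal_pow I m \<subseteq> ideal_mult J (ideal_pow I (m - 1))"
      proof
        fix x assume x: "x \<in> J \<inter> ideal_pow I m"
        then obtain a b where ab: "x = a + b" "a \<in> ideal_mult J (ideal_pow I k)" "b \<in> P N (d * Suc k)"
          using claim[of k] m unfolding S_def by blast
        have aJ: "a \<in> J" using ab(2) imult_sub_left[OF isJ] by blast
        have "b = x - a" using ab(1) by simp
        then have bJ: "b \<in> J" using isI_diff[OF isJ _ aJ] x by simp
        have dd: "d * Suc k = (d * Suc k - 2) + 2" using d2 by simp
        have "b \<in> P N ((d * Suc k - 2) + 2)" using ab(3) dd by simp
        then have "b \<in> ideal_mult J (P N (d * Suc k - 2))" using trunc bJ by blast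
        moreover have "P N (d * Suc k - 2) \<subseteq> P N (d * k)" using d2 by (intro P_anti) simp
        ultimately have "b \<in> ideal_mult J (ideal_pow I k)"
          using imult_mono[OF order.refl, of "P N (d * Suc k - 2)" "ideal_pow I k" J] Ppow[of k] by blast
        then have "a + b \<in> ideal_mult J (ideal_pow I k)" using ab(2) isI_add[OF isI_imult] by blast
        then show "x \<in> ideal_mult J (ideal_pow I (m - 1))" using ab(1) m by simp
      qed
    qed
  qed
qed

lemma gmin2_hom: assumes "i < j" "j < n"
  shows "\<forall>a\<in>Poly_Mapping.keys (gmin2 n (i, j) :: 'a::comm_ring_1 mpoly). dg (2 * n) a = 2"
proof
  fix a assume "a \<in> Poly_Mapping.keys (gmin2 n (i, j) :: 'a mpoly)"
  then have "a \<in> {e i + e (n + j), e j + e (n + i)}" unfolding gmin2_eq using keys_diff by fastforce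
  then show "dg (2 * n) a = 2" using assms by (auto simp: dg_add dg_single)
qed



theorem mainTheorem11:
  fixes n :: nat
  assumes "n \<ge> 3"
  defines "J \<equiv> ideal_gen (gmin2 n ` gen_idx n) :: 'a::field_char_0 mpoly set"
  defines "Jac \<equiv> minors_ideal (n - 1) (gen_idx n) {..<2*n} (jacobian n) :: 'a mpoly set"
  defines "I \<equiv> ideal_add J Jac"
  shows "Jac = ideal_pow (ideal_gen (Var ` {..<2*n})) (n - 1) \<and> aluffi_torsion_free J I"
proof -
  have isJac: "isI Jac" unfolding Jac_def minors_ideal_def by (rule isI_gen)
  have JacP: "Jac = P (2 * n) (n - 1)"
  proof
    show "Jac \<subseteq> P (2 * n) (n - 1)" unfolding Jac_def by (rule Jac_sub_P)
    show "P (2 * n) (n - 1) \<subseteq> Jac"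
    proof (rule P_sub_ideal[OF isJac])
      fix a assume "n - 1 \<le> dg (2 * n) a"
      then obtain zs c where zs: "length zs = n - 1" "set zs \<subseteq> {..<2 * n}"
        "(Poly_Mapping.single a 1 :: 'a mpoly) = c * prod_list (map Var zs)"
        using mono_decomp2 by blast
      have "prod_list (map Var zs) \<in> Jac" unfolding Jac_def by (rule prod_in_Jac[OF assms(1) zs(1,2)])
      then have "c * prod_list (map Var zs) \<in> Jac" by (rule isI_mult[OF isJac])
      then show "(Poly_Mapping.single a 1 :: 'a mpoly) \<in> Jac" using zs(3) by simp
    qed
  qed
  have pw: "ideal_pow (ideal_gen (Var ` {..<2*n})) (n - 1) = (P (2 * n) (n - 1) :: 'a mpoly set)"
    using pow_eq_P[of "2 * n" "n - 1"] unfolding mm_def .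
  have hom: "g \<in> P (2 * n) 2 \<and> (\<forall>a\<in>Poly_Mapping.keys g. dg (2 * n) a \<le> 2)"
    if g: "g \<in> gmin2 n ` gen_idx n" for g :: "'a mpoly"
  proof -
    obtain i j where ij: "g = gmin2 n (i, j)" "i < j" "j < n" using g by (auto simp: gen_idx_def)
    show ?thesis using gmin2_hom[OF ij(2,3), where 'a='a] unfolding ij(1) by (auto intro: PI)
  qed
  have tf: "aluffi_torsion_free J I"
  proof (rule aluffi_abstract)
    show "isI J" unfolding J_def by (rule isI_gen)
    show "\<And>t x. x \<in> J \<Longrightarrow> x \<in> P (2 * n) (t + 2) \<Longrightarrow> x \<in> ideal_mult J (P (2 * n) t)"
      unfolding J_def by (rule J_trunc[OF hom]) auto
    show "2 \<le> n - 1" using assms(1) by simp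
    show "I = ideal_gen (J \<union> P (2 * n) (n - 1))" unfolding I_def ideal_add_def JacP ..
  qed
  show ?thesis using JacP pw tf by simp
qed

end
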